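(* Let $\mathcal{A}=\{A_i\}_{i=0}^p$ be a set of $n\times n$ matrices and let $P_{\mathcal{A}}(\lambda)=\sum_{i=0}^{p}\lambda^i A_i$. Let $(\lambda_j,x_j)$, $j=1,\dots,n$, be $n$ eigenpairs of $P_{\mathcal{A}}(\lambda)$, and put $X=[x_1,\dots,x_n]$, $T=\operatorname{diag}(\lambda_1,\dots,\lambda_n)$. Assume that $X$ is nonsingular and that the geometric multiplicity of each of $\lambda_1,\dots,\lambda_n$ (as an eigenvalue of $P_{\mathcal{A}}$) equals one. If $(\tau_n,W)$ solves the GJBD problem of $\mathcal{A}$, then there exist a permutation matrix $\Pi$ and a nonsingular matrix $D\in\mathbb{D}_{\tau_n}$ such that $WD=X\Pi$; i.e., $(\tau_n,X\Pi)$ also solves the GJBD problem (in particular $(X\Pi)^{\star}A_i(X\Pi)\in\mathbb{D}_{\tau_n}$ for all $i=0,\dots,p$).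
   Context: A partition of a positive integer $n$ is a tuple $\tau_n=(n_1,\dots,n_t)$ of positive integers with $\sum_i n_i=n$; its cardinality is $\operatorname{card}(\tau_n)=t$. For an $n\times n$ matrix $A$ partitioned into blocks $A_{jk}$ of size $n_j\times n_k$, $\operatorname{Bdiag}_{\tau_n}(A)=\operatorname{diag}(A_{11},\dots,A_{tt})$ and $\operatorname{OffBdiag}_{\tau_n}(A)=A-\operatorname{Bdiag}_{\tau_n}(A)$; $A$ is $\tau_n$-block diagonal if $\operatorname{OffBdiag}_{\tau_n}(A)=0$, and $\mathbb{D}_{\tau_n}$ denotes the set of $\tau_n$-block diagonal matrices. The coefficient matrices $A_i$ all lie in one of $\mathbb{A}_n\in\{$real symmetric, complex Hermitian, $\mathbb{R}^{n\times n}$, $\mathbb{C}^{n\times n}\}$, and diagonalizers are sought in a class $\mathbb{W}_n\in\{$real orthogonal, unitary, real nonsingular, complex nonsingular $n\times n$ matrices$\}$; $(\cdot)^{\star}$ denotes transpose for real matrices and conjugate transpose for complex matrices. The JBD problem for a partition $\tau_n$: find $W\in\mathbb{W}_n$ with $W^{\star}A_iW\in\mathbb{D}_{\tau_n}$ for all $i=0,\dots,p$. The GJBD problem: find a partition $\tau_n'$ and $W=W(\tau_n')\in\mathbb{W}_n$ solving the JBD problem for $\tau_n'$ such that $\operatorname{card}(\tau_n')$ is maximal among all partitions for which the JBD problem is solvable; such a pair $(\tau_n',W)$ is called a solution of the GJBD problem. An eigenpair $(\lambda,x)$ of $P(\lambda)$ satisfies $\det P(\lambda)=0$, $x\neq 0$,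 $P(\lambda)x=0$; the geometric multiplicity of $\lambda$ is $\dim\ker P(\lambda)$. *)

theory Defs
  imports "Jordan_Normal_Form.Schur_Decomposition" "Jordan_Normal_Form.Matrix_Kernel"
begin

(* All matrices are represented as complex n x n matrices.  Real matrices are those
   with real entries; for them the conjugate transpose coincides with the transpose,
   so (.)^star is uniformly rendered by mat_adjoint (conjugate transpose). *)

definition real_mat :: "complex mat \<Rightarrow> bool" where
  "real_mat M \<longleftrightarrow> (\<forall>i < dim_row M. \<forall>j < dim_col M. M $$ (i,j) \<in> \<real>)"

datatype Aclass = RealSymmetric | ComplexHermitian | RealGeneral | ComplexGeneral

definition in_Aclass :: "Aclass \<Rightarrow> nat \<Rightarrow> complex mat \<Rightarrow> bool" where
  "in_Aclass c n M \<longleftrightarrow> M \<in> carrier_mat n n \<and>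
     (case c of
        RealSymmetric \<Rightarrow> real_mat M \<and> transpose_mat M = M
      | ComplexHermitian \<Rightarrow> mat_adjoint M = M
      | RealGeneral \<Rightarrow> real_mat M
      | ComplexGeneral \<Rightarrow> True)"

datatype Wclass = RealOrthogonal | Unitary | RealNonsingular | ComplexNonsingular

definition in_Wclass :: "Wclass \<Rightarrow> nat \<Rightarrow> complex mat \<Rightarrow> bool" where
  "in_Wclass c n W \<longleftrightarrow> W \<in> carrier_mat n n \<and>
     (case c of
        RealOrthogonal \<Rightarrow> real_mat W \<and> mat_adjoint W * W = 1\<^sub>m n
      | Unitary \<Rightarrow> mat_adjoint W * W = 1\<^sub>m n
      | RealNonsingular \<Rightarrow> real_mat W \<and> invertible_mat W
      | ComplexNonsingular \<Rightarrow> invertible_mat W)"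

(* a partition tau_n = (n_1,...,n_t) of n, as a list; card tau_n = length tau *)
definition is_partition :: "nat list \<Rightarrow> nat \<Rightarrow> bool" where
  "is_partition \<tau> n \<longleftrightarrow> (\<forall>k \<in> set \<tau>. 0 < k) \<and> sum_list \<tau> = n"

(* indices r and c (0-based) lie in the same diagonal block of the partition:
   block k consists of the indices sum(n_1..n_k) <= r < sum(n_1..n_{k+1}) *)
definition same_block :: "nat list \<Rightarrow> nat \<Rightarrow> nat \<Rightarrow> bool" where
  "same_block \<tau> r c \<longleftrightarrow> (\<exists>k < length \<tau>.
      sum_list (take k \<tau>) \<le> r \<and> r < sum_list (take (Suc k) \<tau>) \<and>
      sum_list (take k \<tau>) \<le> c \<and> c < sum_list (take (Suc k) \<tau>))"

definition block_diag :: "nat list \<Rightarrow> complex mat \<Rightarrow> bool" where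
  "block_diag \<tau> M \<longleftrightarrow> (\<forall>r < dim_row M. \<forall>c < dim_col M.
       \<not> same_block \<tau> r c \<longrightarrow> M $$ (r,c) = 0)"

definition Dset :: "nat list \<Rightarrow> complex mat set" where
  "Dset \<tau> = {M. M \<in> carrier_mat (sum_list \<tau>) (sum_list \<tau>) \<and> block_diag \<tau> M}"

definition JBD_sol :: "Wclass \<Rightarrow> nat \<Rightarrow> (nat \<Rightarrow> complex mat) \<Rightarrow> nat list \<Rightarrow> complex mat \<Rightarrow> bool" where
  "JBD_sol wc p A \<tau> W \<longleftrightarrow> in_Wclass wc (sum_list \<tau>) W \<and>
     (\<forall>i \<le> p. mat_adjoint W * A i * W \<in> Dset \<tau>)"

definition GJBD_sol :: "Wclass \<Rightarrow> nat \<Rightarrow> nat \<Rightarrow> (nat \<Rightarrow> complex mat) \<Rightarrow> nat list \<Rightarrow> complex mat \<Rightarrow> bool" where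
  "GJBD_sol wc n p A \<tau> W \<longleftrightarrow> is_partition \<tau> n \<and> JBD_sol wc p A \<tau> W \<and>
     (\<forall>\<tau>' W'. is_partition \<tau>' n \<and> JBD_sol wc p A \<tau>' W' \<longrightarrow> length \<tau>' \<le> length \<tau>)"

definition matpoly :: "nat \<Rightarrow> nat \<Rightarrow> (nat \<Rightarrow> complex mat) \<Rightarrow> complex \<Rightarrow> complex mat" where
  "matpoly n p A z = mat n n (\<lambda>(r,c). \<Sum>i\<le>p. z ^ i * A i $$ (r,c))"

definition eigenpair :: "nat \<Rightarrow> nat \<Rightarrow> (nat \<Rightarrow> complex mat) \<Rightarrow> complex \<Rightarrow> complex vec \<Rightarrow> bool" where
  "eigenpair n p A z x \<longleftrightarrow> det (matpoly n p A z) = 0 \<and> x \<in> carrier_vec n \<and> x \<noteq> 0\<^sub>v n \<and>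
     matpoly n p A z *\<^sub>v x = 0\<^sub>v n"

definition geom_mult :: "nat \<Rightarrow> nat \<Rightarrow> (nat \<Rightarrow> complex mat) \<Rightarrow> complex \<Rightarrow> nat" where
  "geom_mult n p A z = kernel_dim (matpoly n p A z)"

definition perm_mat :: "nat \<Rightarrow> (nat \<Rightarrow> nat) \<Rightarrow> complex mat" where
  "perm_mat n \<sigma> = mat n n (\<lambda>(i,j). if i = \<sigma> j then 1 else 0)"

end

theory Submission
  imports Defs
begin

definition blk :: "nat list \<Rightarrow> nat \<Rightarrow> nat" where
  "blk \<tau> i = (LEAST k. i < sum_list (take (Suc k) \<tau>))"

lemma psum_mono: "k \<le> k' \<Longrightarrow> sum_list (take k (\<tau>::nat list)) \<le> sum_list (take k' \<tau>)"
  by (metis le_add1 le_add_diff_inverse sum_list_append take_add)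

lemma blk_prop:
  assumes "i < sum_list \<tau>"
  shows "blk \<tau> i < length \<tau> \<and> sum_list (take (blk \<tau> i) \<tau>) \<le> i \<and> i < sum_list (take (Suc (blk \<tau> i)) \<tau>)"
proof -
  have ne: "\<tau> \<noteq> []" using assms by auto
  have ex: "i < sum_list (take (Suc (length \<tau> - 1)) \<tau>)" using ne assms by simp
  have up: "i < sum_list (take (Suc (blk \<tau> i)) \<tau>)" unfolding blk_def by (rule LeastI[where P="\<lambda>k. i < sum_list (take (Suc k) \<tau>)", OF ex])
  have le: "blk \<tau> i \<le> length \<tau> - 1" unfolding blk_def by (rule Least_le[where P="\<lambda>k. i < sum_list (take (Suc k) \<tau>)", OF ex])
  have lo: "sum_list (take (blk \<tau> i) \<tau>) \<le> i"
  proof (cases "blk \<tau> i")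
    case (Suc m)
    have "\<not> i < sum_list (take (Suc m) \<tau>)"
      using not_less_Least[of m "\<lambda>k. i < sum_list (take (Suc k) \<tau>)"] Suc unfolding blk_def by auto
    then show ?thesis using Suc by simp
  qed simp
  show ?thesis using up le lo ne by (metis One_nat_def Suc_pred le_imp_less_Suc length_greater_0_conv)
qed

lemma blk_unique:
  assumes "sum_list (take k \<tau>) \<le> i" "i < sum_list (take (Suc k) \<tau>)"
  shows "blk \<tau> i = k"
  unfolding blk_def
proof (rule Least_equality)
  show "i < sum_list (take (Suc k) \<tau>)" by fact
  fix k' assume h: "i < sum_list (take (Suc k') \<tau>)"
  show "k \<le> k'"
  proof (rule ccontr)
    assume "\<not> k \<le> k'"
    then have "Suc k' \<le> k" by simp
    then have "sum_list (take (Suc k') \<tau>) \<le> sum_list (take k \<tau>)" by (rule psum_mono)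
    then show False using h assms by simp
  qed
qed

lemma same_block_iff:
  assumes "r < sum_list \<tau>" "c < sum_list \<tau>"
  shows "same_block \<tau> r c \<longleftrightarrow> blk \<tau> r = blk \<tau> c"
proof
  assume "same_block \<tau> r c"
  then obtain k where "sum_list (take k \<tau>) \<le> r" "r < sum_list (take (Suc k) \<tau>)"
     "sum_list (take k \<tau>) \<le> c" "c < sum_list (take (Suc k) \<tau>)" unfolding same_block_def by auto
  then show "blk \<tau> r = blk \<tau> c" using blk_unique by metis
next
  assume "blk \<tau> r = blk \<tau> c"
  then show "same_block \<tau> r c" using blk_prop[OF assms(1)] blk_prop[OF assms(2)]
    unfolding same_block_def by metis
qed

lemma adj_carrier: "A \<in> carrier_mat m n \<Longrightarrow> mat_adjoint A \<in> carrier_mat n m"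
  unfolding mat_adjoint_def by auto

lemma adj_index: "A \<in> carrier_mat m n \<Longrightarrow> i < n \<Longrightarrow> j < m \<Longrightarrow>
   mat_adjoint (A :: complex mat) $$ (i,j) = cnj (A $$ (j,i))"
  unfolding mat_adjoint_def by (auto simp: mat_of_rows_def)

lemma adj_mult:
  assumes A: "(A :: complex mat) \<in> carrier_mat m k" and B: "B \<in> carrier_mat k n"
  shows "mat_adjoint (A * B) = mat_adjoint B * mat_adjoint A"
proof (rule eq_matI)
  have AB: "A * B \<in> carrier_mat m n" using A B by auto
  show "dim_row (mat_adjoint (A * B)) = dim_row (mat_adjoint B * mat_adjoint A)"
    using adj_carrier[OF AB] adj_carrier[OF B] by auto
  show "dim_col (mat_adjoint (A * B)) = dim_col (mat_adjoint B * mat_adjoint A)"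
    using adj_carrier[OF AB] adj_carrier[OF A] by auto
  fix i j assume "i < dim_row (mat_adjoint B * mat_adjoint A)" "j < dim_col (mat_adjoint B * mat_adjoint A)"
  then have i: "i < n" and j: "j < m" using adj_carrier[OF A] adj_carrier[OF B] by auto
  have "mat_adjoint (A * B) $$ (i,j) = cnj ((A*B) $$ (j,i))" using adj_index[OF AB i j] .
  also have "\<dots> = (\<Sum>l<k. cnj (A $$ (j,l)) * cnj (B $$ (l,i)))"
    using A B i j by (simp add: scalar_prod_def lessThan_atLeast0)
  also have "\<dots> = (mat_adjoint B * mat_adjoint A) $$ (i,j)"
    using A B i j adj_carrier[OF A] adj_carrier[OF B]
    by (simp add: scalar_prod_def lessThan_atLeast0 adj_index mult.commute)
  finally show "mat_adjoint (A * B) $$ (i, j) = (mat_adjoint B * mat_adjoint A) $$ (i, j)" .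
qed

lemma bd_mult:
  assumes E: "E \<in> Dset \<tau>" and F: "F \<in> Dset \<tau>"
  shows "E * F \<in> Dset \<tau>"
proof -
  let ?n = "sum_list \<tau>"
  have Ec: "E \<in> carrier_mat ?n ?n" and Fc: "F \<in> carrier_mat ?n ?n" using E F unfolding Dset_def by auto
  have Ez: "\<And>r c. r < ?n \<Longrightarrow> c < ?n \<Longrightarrow> blk \<tau> r \<noteq> blk \<tau> c \<Longrightarrow> E $$ (r,c) = 0"
    using E Ec same_block_iff unfolding Dset_def block_diag_def by auto
  have Fz: "\<And>r c. r < ?n \<Longrightarrow> c < ?n \<Longrightarrow> blk \<tau> r \<noteq> blk \<tau> c \<Longrightarrow> F $$ (r,c) = 0"
    using F Fc same_block_iff unfolding Dset_def block_diag_def by auto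
  have "(E * F) $$ (r,c) = 0" if r: "r < ?n" and c: "c < ?n" and ns: "\<not> same_block \<tau> r c" for r c
  proof -
    have nb: "blk \<tau> r \<noteq> blk \<tau> c" using ns same_block_iff[OF r c] by auto
    have "(E * F) $$ (r,c) = (\<Sum>l<?n. E $$ (r,l) * F $$ (l,c))"
      using Ec Fc r c by (simp add: scalar_prod_def lessThan_atLeast0)
    also have "\<dots> = 0"
    proof (rule sum.neutral, intro ballI)
      fix l assume "l \<in> {..<?n}"
      then have l: "l < ?n" by auto
      show "E $$ (r,l) * F $$ (l,c) = 0"
        using Ez[OF r l] Fz[OF l c] nb by (cases "blk \<tau> r = blk \<tau> l") auto
    qed
    finally show ?thesis .
  qed
  then show ?thesis using Ec Fc unfolding Dset_def block_diag_def by auto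
qed

lemma bd_adj:
  assumes E: "E \<in> Dset \<tau>"
  shows "mat_adjoint E \<in> Dset \<tau>"
proof -
  let ?n = "sum_list \<tau>"
  have Ec: "E \<in> carrier_mat ?n ?n" using E unfolding Dset_def by auto
  have "mat_adjoint E $$ (r,c) = 0" if r: "r < ?n" and c: "c < ?n" and ns: "\<not> same_block \<tau> r c" for r c
  proof -
    have "\<not> same_block \<tau> c r" using ns same_block_iff[OF r c] same_block_iff[OF c r] by auto
    then have "E $$ (c,r) = 0" using E Ec r c unfolding Dset_def block_diag_def by auto
    then show ?thesis using adj_index[OF Ec r c] by simp
  qed
  then show ?thesis using adj_carrier[OF Ec] unfolding Dset_def block_diag_def by auto
qed

lemma triple_entry:
  assumes L: "L \<in> carrier_mat n n" and Q: "Q \<in> carrier_mat n n" and R: "R \<in> carrier_mat n n"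
    and r: "r < n" and c: "c < n"
  shows "(L * Q * R) $$ (r,c) = (\<Sum>k<n. \<Sum>l<n. L $$ (r,k) * Q $$ (k,l) * R $$ (l,c))"
proof -
  have "(L * Q * R) $$ (r,c) = (\<Sum>k<n. L $$ (r,k) * (\<Sum>l<n. Q $$ (k,l) * R $$ (l,c)))"
    using L Q R r c by (simp add: scalar_prod_def lessThan_atLeast0)
  also have "\<dots> = (\<Sum>k<n. \<Sum>l<n. L $$ (r,k) * Q $$ (k,l) * R $$ (l,c))"
    by (simp add: sum_distrib_left mult.assoc)
  finally show ?thesis .
qed

lemma matpoly_carrier: "matpoly n p A z \<in> carrier_mat n n"
  unfolding matpoly_def by auto

lemma triple_matpoly:
  assumes L: "L \<in> carrier_mat n n" and R: "R \<in> carrier_mat n n"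
    and Ac: "\<forall>i \<le> p. A i \<in> carrier_mat n n"
    and r: "r < n" and c: "c < n"
  shows "(L * matpoly n p A z * R) $$ (r,c) = (\<Sum>i\<le>p. z ^ i * (L * A i * R) $$ (r,c))"
proof -
  have "(L * matpoly n p A z * R) $$ (r,c) =
     (\<Sum>k<n. \<Sum>l<n. L $$ (r,k) * (\<Sum>i\<le>p. z ^ i * A i $$ (k,l)) * R $$ (l,c))"
    using triple_entry[OF L matpoly_carrier R r c] by (simp add: matpoly_def)
  also have "\<dots> = (\<Sum>k<n. \<Sum>l<n. \<Sum>i\<le>p. z ^ i * (L $$ (r,k) * A i $$ (k,l) * R $$ (l,c)))"
    by (simp add: sum_distrib_left sum_distrib_right mult_ac)
  also have "\<dots> = (\<Sum>i\<le>p. z ^ i * (\<Sum>k<n. \<Sum>l<n. L $$ (r,k) * A i $$ (k,l) * R $$ (l,c)))"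
    by (simp add: sum_distrib_left sum.swap[of _ "{..p}"])
  also have "\<dots> = (\<Sum>i\<le>p. z ^ i * (L * A i * R) $$ (r,c))"
    using triple_entry[OF L _ R r c] Ac by simp
  finally show ?thesis .
qed

definition tr :: "complex mat \<Rightarrow> complex" where
  "tr M = (\<Sum>i<dim_row M. M $$ (i,i))"

lemma tr_comm:
  assumes A: "A \<in> carrier_mat n m" and B: "B \<in> carrier_mat m n"
  shows "tr (A * B) = tr (B * A)"
proof -
  have "tr (A * B) = (\<Sum>i<n. \<Sum>l<m. A $$ (i,l) * B $$ (l,i))"
    using A B unfolding tr_def by (simp add: scalar_prod_def lessThan_atLeast0)
  also have "\<dots> = (\<Sum>l<m. \<Sum>i<n. B $$ (l,i) * A $$ (i,l))"
    by (subst sum.swap) (simp add: mult.commute)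
  also have "\<dots> = tr (B * A)"
    using A B unfolding tr_def by (simp add: scalar_prod_def lessThan_atLeast0)
  finally show ?thesis .
qed

lemma perm_mat_carrier: "perm_mat n \<sigma> \<in> carrier_mat n n"
  unfolding perm_mat_def by auto

lemma mult_perm_entry:
  assumes Y: "Y \<in> carrier_mat m n" and r: "r < m" and c: "c < n" and sc: "\<sigma> c < n"
  shows "(Y * perm_mat n \<sigma>) $$ (r,c) = Y $$ (r, \<sigma> c)"
proof -
  have "(Y * perm_mat n \<sigma>) $$ (r,c) = (\<Sum>l<n. Y $$ (r,l) * (if l = \<sigma> c then 1 else 0))"
    using Y r c by (simp add: scalar_prod_def lessThan_atLeast0 perm_mat_def)
  also have "\<dots> = Y $$ (r, \<sigma> c)"
    using sc by (simp add: if_distrib cong: if_cong)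
  finally show ?thesis .
qed

lemma kd1:
  fixes M :: "complex mat"
  assumes M: "M \<in> carrier_mat n n" and d: "kernel_dim M = 1"
    and x: "x \<in> mat_kernel M" "x \<noteq> 0\<^sub>v n" and u: "u \<in> mat_kernel M"
  shows "\<exists>c. u = c \<cdot>\<^sub>v x"
proof -
  interpret kernel n n M by (unfold_locales, rule M)
  obtain B where B: "finite B" "basis B" using kernel_basis_exists[OF M] by auto
  have "card B = 1" using Ker.dim_basis[OF B] d by simp
  then obtain b where Bb: "B = {b}" by (meson card_1_singletonE)
  have bK: "b \<in> mat_kernel M" using B(2) Bb unfolding Ker.basis_def by auto
  have sp: "span {b} = mat_kernel M" using B(2) Bb unfolding Ker.basis_def by auto
  have mult: "\<exists>c. v = c \<cdot>\<^sub>v b" if "v \<in> mat_kernel M" for v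
  proof -
    from that sp have "v \<in> NC.span {b}" using span_same bK by auto
    then obtain a where "NC.lincomb a {b} = v"
      using NC.finite_in_span[of "{b}" v] bK mat_kernel_carrier[OF M] by auto
    moreover have "NC.lincomb a {b} = a b \<cdot>\<^sub>v b"
      using bK mat_kernel_carrier[OF M] unfolding NC.lincomb_def by auto
    ultimately show ?thesis by auto
  qed
  obtain c where c: "x = c \<cdot>\<^sub>v b" using mult x by auto
  obtain d where dd: "u = d \<cdot>\<^sub>v b" using mult u by auto
  have bC: "b \<in> carrier_vec n" using bK mat_kernel_carrier[OF M] by auto
  have "c \<noteq> 0" using c x bC by auto
  then have "u = (d / c) \<cdot>\<^sub>v x" using dd c bC by (auto simp: smult_smult_assoc)
  then show ?thesis by blast
qed

lemma adj_one: "mat_adjoint (1\<^sub>m n :: complex mat) = 1\<^sub>m n"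
  using adj_carrier[OF one_carrier_mat[of n]]
  by (intro eq_matI) (auto simp: adj_index[of _ n n])

lemma mat_vec_zero: "(W :: complex mat) \<in> carrier_mat m n \<Longrightarrow> W *\<^sub>v 0\<^sub>v n = 0\<^sub>v m"
  by (intro eq_vecI) auto

lemma mv_entry:
  assumes "(M :: complex mat) \<in> carrier_mat n m" "v \<in> carrier_vec m" "r < n"
  shows "(M *\<^sub>v v) $ r = (\<Sum>c<m. M $$ (r,c) * v $ c)"
  using assms by (auto simp: scalar_prod_def lessThan_atLeast0 mult_mat_vec_def)

lemma col_support:
  fixes W V :: "complex mat"
  assumes Ac: "\<forall>i \<le> p. A i \<in> carrier_mat n n"
    and Wc: "W \<in> carrier_mat n n" and Vc: "V \<in> carrier_mat n n"
    and WV: "W * V = 1\<^sub>m n" and VW: "V * W = 1\<^sub>m n"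
    and Bd: "\<forall>i \<le> p. mat_adjoint W * A i * W \<in> Dset \<tau>"
    and nt: "sum_list \<tau> = n"
    and ep: "eigenpair n p A z xj" and gm: "geom_mult n p A z = 1"
  shows "\<exists>k. \<forall>i<n. (V *\<^sub>v xj) $ i \<noteq> 0 \<longrightarrow> blk \<tau> i = k"
proof -
  let ?P = "matpoly n p A z"
  let ?M = "mat_adjoint W * ?P * W"
  let ?y = "V *\<^sub>v xj"
  have Pc: "?P \<in> carrier_mat n n" by (rule matpoly_carrier)
  have xc: "xj \<in> carrier_vec n" and xn: "xj \<noteq> 0\<^sub>v n" and Px: "?P *\<^sub>v xj = 0\<^sub>v n"
    using ep unfolding eigenpair_def by auto
  have aWc: "mat_adjoint W \<in> carrier_mat n n" using adj_carrier[OF Wc] .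
  have aVc: "mat_adjoint V \<in> carrier_mat n n" using adj_carrier[OF Vc] .
  have aVW: "mat_adjoint V * mat_adjoint W = 1\<^sub>m n"
    using adj_mult[OF Wc Vc] WV adj_one by simp
  have yc: "?y \<in> carrier_vec n" using Vc xc by auto
  have Wy: "W *\<^sub>v ?y = xj" using Wc Vc xc WV by (simp flip: assoc_mult_mat_vec)
  have yn: "?y \<noteq> 0\<^sub>v n" using Wy xn Wc mat_vec_zero[OF Wc] by auto
  then obtain r0 where r0: "r0 < n" "?y $ r0 \<noteq> 0" using yc by (metis eq_vecI carrier_vecD index_zero_vec)
  have Mz: "?M $$ (r,c) = 0" if r: "r < n" and c: "c < n" and nb: "blk \<tau> r \<noteq> blk \<tau> c" for r c
  proof -
    have ns: "\<not> same_block \<tau> r c" using same_block_iff[of r \<tau> c] nt r c nb by auto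
    have "?M $$ (r,c) = (\<Sum>i\<le>p. z ^ i * (mat_adjoint W * A i * W) $$ (r,c))"
      by (rule triple_matpoly[OF aWc Wc Ac r c])
    also have "\<dots> = 0"
    proof -
      have "\<forall>i\<le>p. (mat_adjoint W * A i * W) $$ (r,c) = 0"
      proof (intro allI impI)
        fix i assume "i \<le> p"
        then have "block_diag \<tau> (mat_adjoint W * A i * W)" and
          cc: "mat_adjoint W * A i * W \<in> carrier_mat n n" using Bd nt unfolding Dset_def by auto
        then show "(mat_adjoint W * A i * W) $$ (r,c) = 0"
          using ns r c unfolding block_diag_def by (metis carrier_matD)
      qed
      then show ?thesis by (intro sum.neutral) auto
    qed
    finally show ?thesis .
  qed
  have ker: "mat_kernel ?P = {v. v \<in> carrier_vec n \<and> ?P *\<^sub>v v = 0\<^sub>v n}" using mat_kernel[OF Pc] .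
  define k where "k = blk \<tau> r0"
  define pr where "pr = vec n (\<lambda>i. if blk \<tau> i = k then ?y $ i else 0)"
  have prc: "pr \<in> carrier_vec n" unfolding pr_def by auto
  have Mc: "?M \<in> carrier_mat n n" using aWc Pc Wc by auto
  have My: "?M *\<^sub>v ?y = 0\<^sub>v n"
  proof -
    have "?M *\<^sub>v ?y = mat_adjoint W *\<^sub>v (?P *\<^sub>v (W *\<^sub>v ?y))"
      using assoc_mult_mat_vec[OF mult_carrier_mat[OF aWc Pc] Wc yc]
        assoc_mult_mat_vec[OF aWc Pc mult_mat_vec_carrier[OF Wc yc]] by metis
    then show ?thesis using Wy Px aWc mat_vec_zero[OF aWc] by simp
  qed
  have Mpr: "?M *\<^sub>v pr = 0\<^sub>v n"
  proof (rule eq_vecI)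
    show "dim_vec (?M *\<^sub>v pr) = dim_vec (0\<^sub>v n)" using aWc by (simp add: carrier_matD)
    fix r assume "r < dim_vec (0\<^sub>v n)"
    then have r: "r < n" by simp
    have e1: "(?M *\<^sub>v pr) $ r = (\<Sum>c<n. ?M $$ (r,c) * pr $ c)"
      by (rule mv_entry[OF Mc prc r])
    have e2: "(\<Sum>c<n. ?M $$ (r,c) * ?y $ c) = 0"
      using My mv_entry[OF Mc yc r] r by simp
    show "(?M *\<^sub>v pr) $ r = 0\<^sub>v n $ r"
    proof (cases "blk \<tau> r = k")
      case True
      have "(\<Sum>c<n. ?M $$ (r,c) * pr $ c) = (\<Sum>c<n. ?M $$ (r,c) * ?y $ c)"
        by (rule sum.cong, simp, auto simp: pr_def True Mz r)
      then show ?thesis using e1 e2 r by simp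
    next
      case False
      have "(\<Sum>c<n. ?M $$ (r,c) * pr $ c) = 0"
        by (rule sum.neutral, auto simp: pr_def False Mz r)
      then show ?thesis using e1 r by simp
    qed
  qed
  have Ppr: "?P *\<^sub>v (W *\<^sub>v pr) = 0\<^sub>v n"
  proof -
    have "mat_adjoint W *\<^sub>v (?P *\<^sub>v (W *\<^sub>v pr)) = 0\<^sub>v n"
      using Mpr assoc_mult_mat_vec[OF mult_carrier_mat[OF aWc Pc] Wc prc]
        assoc_mult_mat_vec[OF aWc Pc mult_mat_vec_carrier[OF Wc prc]] by metis
    then have "mat_adjoint V *\<^sub>v (mat_adjoint W *\<^sub>v (?P *\<^sub>v (W *\<^sub>v pr))) = 0\<^sub>v n"
      using aVc mat_vec_zero[OF aVc] by simp
    moreover have uc: "?P *\<^sub>v (W *\<^sub>v pr) \<in> carrier_vec n" using Pc Wc prc by auto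
    moreover have "mat_adjoint V *\<^sub>v (mat_adjoint W *\<^sub>v (?P *\<^sub>v (W *\<^sub>v pr))) = ?P *\<^sub>v (W *\<^sub>v pr)"
      using assoc_mult_mat_vec[OF aVc aWc uc] aVW uc by simp
    ultimately show ?thesis by simp
  qed
  have "W *\<^sub>v pr \<in> mat_kernel ?P" using ker Ppr Wc prc by auto
  moreover have "xj \<in> mat_kernel ?P" using ker xc Px by auto
  moreover have "kernel_dim ?P = 1" using gm unfolding geom_mult_def .
  ultimately obtain c where c: "W *\<^sub>v pr = c \<cdot>\<^sub>v xj" using kd1[OF Pc _ _ xn] by blast
  have prc2: "pr = c \<cdot>\<^sub>v ?y"
  proof -
    have "V *\<^sub>v (W *\<^sub>v pr) = pr" using VW Vc Wc prc by (simp flip: assoc_mult_mat_vec)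
    moreover have "V *\<^sub>v (c \<cdot>\<^sub>v xj) = c \<cdot>\<^sub>v ?y" using mult_mat_vec[OF Vc xc] .
    ultimately show ?thesis using c by simp
  qed
  have "pr $ r0 = ?y $ r0" using r0 unfolding pr_def k_def by simp
  moreover have "(c \<cdot>\<^sub>v ?y) $ r0 = c * ?y $ r0"
  proof -
    have gen: "\<And>w. w \<in> carrier_vec n \<Longrightarrow> (c \<cdot>\<^sub>v w) $ r0 = c * w $ r0" using r0 by auto
    show ?thesis by (rule gen[OF yc])
  qed
  ultimately have "c * ?y $ r0 = 1 * ?y $ r0" using prc2 by simp
  then have "c = 1" using r0(2) by (metis mult_right_cancel)
  then have pry: "pr = ?y" using prc2 yc by simp
  have "\<forall>i<n. ?y $ i \<noteq> 0 \<longrightarrow> blk \<tau> i = k"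
  proof (intro allI impI)
    fix i assume i: "i < n" and nz: "?y $ i \<noteq> 0"
    have "pr $ i = (if blk \<tau> i = k then ?y $ i else 0)" unfolding pr_def using i by simp
    then show "blk \<tau> i = k" using pry nz by (auto split: if_splits)
  qed
  then show ?thesis by blast
qed

lemma perm_exists:
  fixes f g :: "nat \<Rightarrow> nat"
  assumes card: "\<forall>k. card {i. i < n \<and> f i = k} = card {j. j < n \<and> g j = k}"
  shows "\<exists>\<sigma>. \<sigma> permutes {..<n} \<and> (\<forall>i<n. g (\<sigma> i) = f i)"
proof -
  have "\<forall>k. \<exists>h. bij_betw h {i. i < n \<and> f i = k} {j. j < n \<and> g j = k}"
    using card by (auto intro: finite_same_card_bij)
  then obtain H where H: "\<And>k. bij_betw (H k) {i. i < n \<and> f i = k} {j. j < n \<and> g j = k}" by metis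
  define \<sigma> where "\<sigma> i = (if i < n then H (f i) i else i)" for i
  have mem: "\<sigma> i < n \<and> g (\<sigma> i) = f i" if i: "i < n" for i
  proof -
    have "H (f i) i \<in> {j. j < n \<and> g j = f i}" using bij_betwE[OF H[of "f i"]] i by auto
    then show ?thesis using i unfolding \<sigma>_def by auto
  qed
  have inj: "inj_on \<sigma> {..<n}"
  proof (rule inj_onI)
    fix i i' assume i: "i \<in> {..<n}" and i': "i' \<in> {..<n}" and e: "\<sigma> i = \<sigma> i'"
    have fe: "f i = f i'" using mem[of i] mem[of i'] i i' e by auto
    have "H (f i) i = H (f i) i'" using e i i' fe unfolding \<sigma>_def by auto
    moreover have "inj_on (H (f i)) {j. j < n \<and> f j = f i}" using H bij_betw_def by blast
    ultimately show "i = i'" using i i' fe by (auto dest: inj_onD)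
  qed
  have img: "\<sigma> ` {..<n} = {..<n}"
    by (rule endo_inj_surj) (use mem inj in auto)
  have "\<sigma> permutes {..<n}"
    by (rule bij_imp_permutes) (use inj img in \<open>auto simp: bij_betw_def \<sigma>_def\<close>)
  then show ?thesis using mem by blast
qed

lemma inv_from_left:
  assumes A: "(A :: complex mat) \<in> carrier_mat n n" and B: "B \<in> carrier_mat n n" and BA: "B * A = 1\<^sub>m n"
  shows "invertible_mat A"
proof -
  have AB: "A * B = 1\<^sub>m n" using mat_mult_left_right_inverse[OF B A BA] .
  show ?thesis unfolding invertible_mat_def inverts_mat_def square_mat.simps
    using A B AB BA by (intro conjI exI[of _ B]) auto
qed

lemma inv_obtain:
  assumes A: "(A :: complex mat) \<in> carrier_mat n n" and inv: "invertible_mat A"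
  shows "\<exists>B. B \<in> carrier_mat n n \<and> A * B = 1\<^sub>m n \<and> B * A = 1\<^sub>m n"
proof -
  obtain B where AB: "A * B = 1\<^sub>m (dim_row A)" and BA: "B * A = 1\<^sub>m (dim_row B)"
    using inv unfolding invertible_mat_def inverts_mat_def by auto
  have c: "dim_col B = n" using arg_cong[OF AB, of dim_col] A by auto
  have r: "dim_row B = n" using arg_cong[OF BA, of dim_col] A by auto
  show ?thesis using AB BA A c r by (intro exI[of _ B]) auto
qed

lemma sum_ind: "(\<Sum>i<(n::nat). if P i then (1::complex) else 0) = of_nat (card {i. i < n \<and> P i})"
proof -
  have "(\<Sum>i<n. if P i then (1::complex) else 0) = (\<Sum>i\<in>{i \<in> {..<n}. P i}. 1)"
    by (rule sum.inter_filter[symmetric]) simp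
  also have "{i \<in> {..<n}. P i} = {i. i < n \<and> P i}" by auto
  also have "(\<Sum>i\<in>{i. i < n \<and> P i}. (1::complex)) = of_nat (card {i. i < n \<and> P i})" by simp
  finally show ?thesis .
qed

lemma diag_mult_left:
  assumes Y: "(Y :: complex mat) \<in> carrier_mat n n" and r: "r < n" and c: "c < n"
  shows "(mat n n (\<lambda>(i,j). if i = j \<and> Q i then 1 else 0) * Y) $$ (r,c) = (if Q r then Y $$ (r,c) else 0)"
proof -
  have "(mat n n (\<lambda>(i,j). if i = j \<and> Q i then 1 else 0) * Y) $$ (r,c) =
     (\<Sum>l<n. (if r = l \<and> Q r then 1 else 0) * Y $$ (l,c))"
    using Y r c by (simp add: scalar_prod_def lessThan_atLeast0)
  also have "\<dots> = (\<Sum>l<n. if l = r then (if Q r then Y $$ (r,c) else 0) else 0)"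
    by (rule sum.cong) auto
  also have "\<dots> = (if Q r then Y $$ (r,c) else 0)" using r by simp
  finally show ?thesis .
qed

lemma diag_mult_right:
  assumes Y: "(Y :: complex mat) \<in> carrier_mat n n" and r: "r < n" and c: "c < n"
  shows "(Y * mat n n (\<lambda>(i,j). if i = j \<and> Q i then 1 else 0)) $$ (r,c) = (if Q c then Y $$ (r,c) else 0)"
proof -
  have "(Y * mat n n (\<lambda>(i,j). if i = j \<and> Q i then 1 else 0)) $$ (r,c) =
     (\<Sum>l<n. Y $$ (r,l) * (if l = c \<and> Q l then 1 else 0))"
    using Y r c by (simp add: scalar_prod_def lessThan_atLeast0)
  also have "\<dots> = (\<Sum>l<n. if l = c then (if Q c then Y $$ (r,c) else 0) else 0)"
    by (rule sum.cong) auto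
  also have "\<dots> = (if Q c then Y $$ (r,c) else 0)" using c by simp
  finally show ?thesis .
qed

lemma tr_diag: "tr (mat n n (\<lambda>(i,j). if i = j \<and> Q i then 1 else 0)) = of_nat (card {i. i < n \<and> Q i})"
  unfolding tr_def by (simp add: sum_ind)

theorem theorem3p1:
  fixes n p :: nat
    and ac :: Aclass and wc :: Wclass
    and A :: "nat \<Rightarrow> complex mat"
    and lam :: "nat \<Rightarrow> complex" and x :: "nat \<Rightarrow> complex vec"
    and \<tau> :: "nat list" and W :: "complex mat"
  assumes A_class: "\<forall>i \<le> p. in_Aclass ac n (A i)"
    and eig: "\<forall>j < n. eigenpair n p A (lam j) (x j)"
    and X_nonsing: "invertible_mat (mat_of_cols n (map x [0..<n]))"
    and gm_one: "\<forall>j < n. geom_mult n p A (lam j) = 1"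
    and sol: "GJBD_sol wc n p A \<tau> W"
  shows "\<exists>\<sigma> D. \<sigma> permutes {..<n} \<and> D \<in> Dset \<tau> \<and> invertible_mat D \<and>
           W * D = mat_of_cols n (map x [0..<n]) * perm_mat n \<sigma> \<and>
           (\<forall>i \<le> p. mat_adjoint (mat_of_cols n (map x [0..<n]) * perm_mat n \<sigma>) * A i
                      * (mat_of_cols n (map x [0..<n]) * perm_mat n \<sigma>) \<in> Dset \<tau>)"
proof -
  define X where "X = mat_of_cols n (map x [0..<n])"
  have part: "is_partition \<tau> n" and jbd: "JBD_sol wc p A \<tau> W"
    using sol unfolding GJBD_sol_def by auto
  have nt: "sum_list \<tau> = n" using part unfolding is_partition_def by auto
  have Wcl: "in_Wclass wc n W" and Bd: "\<forall>i\<le>p. mat_adjoint W * A i * W \<in> Dset \<tau>"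
    using jbd nt unfolding JBD_sol_def by auto
  have Wc: "W \<in> carrier_mat n n" using Wcl unfolding in_Wclass_def by auto
  have Winv: "invertible_mat W"
  proof (cases wc)
    case RealOrthogonal
    then have "mat_adjoint W * W = 1\<^sub>m n" using Wcl unfolding in_Wclass_def by auto
    then show ?thesis using inv_from_left[OF Wc adj_carrier[OF Wc]] by auto
  next
    case Unitary
    then have "mat_adjoint W * W = 1\<^sub>m n" using Wcl unfolding in_Wclass_def by auto
    then show ?thesis using inv_from_left[OF Wc adj_carrier[OF Wc]] by auto
  qed (use Wcl in \<open>auto simp: in_Wclass_def\<close>)
  obtain V where Vc: "V \<in> carrier_mat n n" and WV: "W * V = 1\<^sub>m n" and VW: "V * W = 1\<^sub>m n"
    using inv_obtain[OF Wc Winv] by auto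
  have Ac: "\<forall>i\<le>p. A i \<in> carrier_mat n n" using A_class unfolding in_Aclass_def by auto
  have Xc: "X \<in> carrier_mat n n" unfolding X_def using mat_of_cols_carrier(1)[of n "map x [0..<n]"] by simp
  obtain Xi where Xic: "Xi \<in> carrier_mat n n" and XXi: "X * Xi = 1\<^sub>m n" and XiX: "Xi * X = 1\<^sub>m n"
    using inv_obtain[OF Xc] X_nonsing unfolding X_def by auto
  have xc: "\<And>j. j < n \<Longrightarrow> x j \<in> carrier_vec n" using eig unfolding eigenpair_def by auto
  have colX: "\<And>j. j < n \<Longrightarrow> col X j = x j"
    unfolding X_def using xc by (subst col_mat_of_cols) auto
  define Y where "Y = V * X"
  define Yi where "Yi = Xi * W"
  have Yc: "Y \<in> carrier_mat n n" unfolding Y_def using Vc Xc by auto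
  have Yic: "Yi \<in> carrier_mat n n" unfolding Yi_def using Xic Wc by auto
  have YYi: "Y * Yi = 1\<^sub>m n"
  proof -
    have "Y * Yi = V * (X * Xi) * W" unfolding Y_def Yi_def
      using Vc Xc Xic Wc by (simp add: assoc_mult_mat[of _ n n _ n _ n])
    then show ?thesis using XXi Vc VW by simp
  qed
  have YiY: "Yi * Y = 1\<^sub>m n"
  proof -
    have "Yi * Y = Xi * (W * V) * X" unfolding Y_def Yi_def
      using Vc Xc Xic Wc by (simp add: assoc_mult_mat[of _ n n _ n _ n])
    then show ?thesis using XiX Xic WV by simp
  qed
  have Yent: "Y $$ (i,j) = (V *\<^sub>v x j) $ i" if "i < n" "j < n" for i j
    using that Vc Xc colX[of j] unfolding Y_def by simp
  have supp: "\<exists>k. \<forall>i<n. Y $$ (i,j) \<noteq> 0 \<longrightarrow> blk \<tau> i = k" if j: "j < n" for j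
  proof -
    obtain k where "\<forall>i<n. (V *\<^sub>v x j) $ i \<noteq> 0 \<longrightarrow> blk \<tau> i = k"
      using col_support[OF Ac Wc Vc WV VW Bd nt] eig gm_one j by blast
    then show ?thesis using Yent j by auto
  qed
  define b where "b j = (SOME k. \<forall>i<n. Y $$ (i,j) \<noteq> 0 \<longrightarrow> blk \<tau> i = k)" for j
  have bprop: "blk \<tau> i = b j" if "i < n" "j < n" "Y $$ (i,j) \<noteq> 0" for i j
    using someI_ex[OF supp[of j]] that unfolding b_def by blast
  have cards: "card {i. i < n \<and> blk \<tau> i = k} = card {j. j < n \<and> b j = k}" for k
  proof -
    define Pk where "Pk = mat n n (\<lambda>(i,j). if i = j \<and> blk \<tau> i = k then (1::complex) else 0)"
    define Qk where "Qk = mat n n (\<lambda>(i,j). if i = j \<and> b i = k then (1::complex) else 0)"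
    have Pkc: "Pk \<in> carrier_mat n n" and Qkc: "Qk \<in> carrier_mat n n" unfolding Pk_def Qk_def by auto
    have YQ: "Y * Qk = Pk * Y"
    proof (rule eq_matI)
      fix r c assume "r < dim_row (Pk * Y)" "c < dim_col (Pk * Y)"
      then have r: "r < n" and c: "c < n" using Pkc Yc by auto
      have e1: "(Y * Qk) $$ (r,c) = (if b c = k then Y $$ (r,c) else 0)"
        unfolding Qk_def by (rule diag_mult_right[OF Yc r c])
      have e2: "(Pk * Y) $$ (r,c) = (if blk \<tau> r = k then Y $$ (r,c) else 0)"
        unfolding Pk_def by (rule diag_mult_left[OF Yc r c])
      show "(Y * Qk) $$ (r,c) = (Pk * Y) $$ (r,c)"
        using e1 e2 bprop[OF r c] by (cases "Y $$ (r,c) = 0") auto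
    qed (use Pkc Qkc Yc in auto)
    have "tr Qk = tr (Yi * (Y * Qk))"
      using Yic Yc Qkc YiY by (simp add: assoc_mult_mat[of Yi n n Y n Qk n, symmetric])
    also have "\<dots> = tr (Yi * (Pk * Y))" using YQ by simp
    also have "\<dots> = tr ((Pk * Y) * Yi)" using tr_comm[OF Yic, of "Pk * Y"] Pkc Yc by auto
    also have "\<dots> = tr Pk"
      using Yic Yc Pkc YYi by (simp add: assoc_mult_mat[of Pk n n Y n Yi n])
    finally have "tr Qk = tr Pk" .
    then show ?thesis unfolding Pk_def Qk_def tr_diag by simp
  qed
  obtain \<sigma> where \<sigma>: "\<sigma> permutes {..<n}" and sb: "\<forall>i<n. b (\<sigma> i) = blk \<tau> i"
    using perm_exists[of n "blk \<tau>" b] cards by blast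
  have \<sigma>n: "\<And>i. i < n \<Longrightarrow> \<sigma> i < n" using permutes_in_image[OF \<sigma>] by auto
  define D where "D = Y * perm_mat n \<sigma>"
  have Dc: "D \<in> carrier_mat n n" unfolding D_def using Yc perm_mat_carrier by auto
  have Dent: "D $$ (r,c) = Y $$ (r, \<sigma> c)" if "r < n" "c < n" for r c
    unfolding D_def using mult_perm_entry[where \<sigma>=\<sigma>, OF Yc that \<sigma>n[OF that(2)]] .
  have DD: "D \<in> Dset \<tau>"
  proof -
    have "D $$ (r,c) = 0" if r: "r < n" and c: "c < n" and ns: "\<not> same_block \<tau> r c" for r c
    proof (rule ccontr)
      assume "D $$ (r,c) \<noteq> 0"
      then have "blk \<tau> r = b (\<sigma> c)" using bprop[OF r \<sigma>n[OF c]] Dent[OF r c] by simp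
      then have "blk \<tau> r = blk \<tau> c" using sb c by simp
      then show False using ns same_block_iff[of r \<tau> c] r c nt by simp
    qed
    then show ?thesis using Dc nt unfolding Dset_def block_diag_def by auto
  qed
  have PP: "perm_mat n \<sigma> * perm_mat n (inv_into UNIV \<sigma>) = 1\<^sub>m n"
  proof (rule eq_matI)
    fix r c assume "r < dim_row (1\<^sub>m n :: complex mat)" "c < dim_col (1\<^sub>m n :: complex mat)"
    then have r: "r < n" and c: "c < n" by auto
    have ic: "inv_into UNIV \<sigma> c < n" using permutes_in_image[OF permutes_inv[OF \<sigma>]] c by auto
    have "(perm_mat n \<sigma> * perm_mat n (inv_into UNIV \<sigma>)) $$ (r,c) = perm_mat n \<sigma> $$ (r, inv_into UNIV \<sigma> c)"
      by (rule mult_perm_entry[where \<sigma>="inv_into UNIV \<sigma>", OF perm_mat_carrier r c ic])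
    also have "\<dots> = (if r = c then 1 else 0)"
      using r ic permutes_inverses(1)[OF \<sigma>] unfolding perm_mat_def by auto
    finally show "(perm_mat n \<sigma> * perm_mat n (inv_into UNIV \<sigma>)) $$ (r,c) = (1\<^sub>m n :: complex mat) $$ (r,c)"
      using r c by simp
  qed (auto simp: perm_mat_def)
  have Dinv: "invertible_mat D"
  proof -
    have Pc: "perm_mat n \<sigma> \<in> carrier_mat n n" "perm_mat n (inv_into UNIV \<sigma>) \<in> carrier_mat n n"
      by (rule perm_mat_carrier)+
    have "D * (perm_mat n (inv_into UNIV \<sigma>) * Yi) = Y * (perm_mat n \<sigma> * perm_mat n (inv_into UNIV \<sigma>)) * Yi"
      unfolding D_def using Yc Yic Pc by (simp add: assoc_mult_mat[of _ n n _ n _ n])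
    also have "\<dots> = 1\<^sub>m n" using PP YYi Yc by simp
    finally have "D * (perm_mat n (inv_into UNIV \<sigma>) * Yi) = 1\<^sub>m n" .
    then have "(perm_mat n (inv_into UNIV \<sigma>) * Yi) * D = 1\<^sub>m n"
      using mat_mult_left_right_inverse[OF Dc] Pc Yic by auto
    moreover have "perm_mat n (inv_into UNIV \<sigma>) * Yi \<in> carrier_mat n n" using Pc Yic by auto
    ultimately show ?thesis using inv_from_left[OF Dc] by blast
  qed
  have WD: "W * D = X * perm_mat n \<sigma>"
  proof -
    have "W * D = (W * V) * X * perm_mat n \<sigma>" unfolding D_def Y_def
      using Wc Vc Xc perm_mat_carrier by (simp add: assoc_mult_mat[of _ n n _ n _ n])
    then show ?thesis using WV Xc by simp
  qed
  have fin: "mat_adjoint (X * perm_mat n \<sigma>) * A i * (X * perm_mat n \<sigma>) \<in> Dset \<tau>" if i: "i \<le> p" for i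
  proof -
    have Aic: "A i \<in> carrier_mat n n" using Ac i by auto
    have aD: "mat_adjoint D \<in> carrier_mat n n" using adj_carrier[OF Dc] .
    have aW: "mat_adjoint W \<in> carrier_mat n n" using adj_carrier[OF Wc] .
    have "mat_adjoint (X * perm_mat n \<sigma>) * A i * (X * perm_mat n \<sigma>)
        = mat_adjoint D * mat_adjoint W * A i * (W * D)"
      using WD adj_mult[OF Wc Dc] by simp
    also have "\<dots> = mat_adjoint D * (mat_adjoint W * A i * W) * D"
      using aD aW Aic Wc Dc by (simp add: assoc_mult_mat[of _ n n _ n _ n])
    finally have eq: "mat_adjoint (X * perm_mat n \<sigma>) * A i * (X * perm_mat n \<sigma>)
        = mat_adjoint D * (mat_adjoint W * A i * W) * D" .
    show ?thesis unfolding eq using bd_mult[OF bd_mult[OF bd_adj[OF DD]] DD] Bd i by auto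
  qed
  show ?thesis
    using \<sigma> DD Dinv WD fin unfolding X_def by blast
qed

end
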